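(* Let $p_t,p_g\in[0,1]$ with $p_tp_g<1$. For every instance $\mathcal{I}$ and binary prediction $\hat{\mathbf{O}}$, the algorithm \textsc{SmoothMerge} with parameters $p_t,p_g$ satisfies \[ \mathbb{E}[|\textsc{Alg}(\mathcal{I})|] \ge \max\Big\{ |\textsc{Opt}(\mathcal{I})|\cdot(1-\eta)\cdot p_t(1-p_g),\ \frac{p_g-p_tp_g}{1-p_tp_g}\cdot|\textsc{Greedy}(\mathcal{I})| \Big\}, \] where $\eta=\eta(\mathcal{I},\hat{\mathbf{O}})$ is the prediction error.
   Context: Online interval scheduling: intervals $I_j$ with release time $r_j$, deadline $d_j$, length $l_j=d_j-r_j$ arrive online in non-decreasing order of release time; each must be irrevocably accepted or rejected upon arrival; accepted intervals must be pairwise non-overlapping; objective: maximize total accepted length $|\cdot|$. $\textsc{Opt}(\mathcal{I})$ is an optimal offline solution. A binary prediction $\hat{\mathbf{O}}=(\hat o_1,\dots,\hat o_n)\in\{0,1\}^n$ is revealed online with the intervals. $\textsc{Trust}$ is the algorithm accepting $I_j$ iff $\hat o_j=1$; $\textsc{Greedy}$ accepts each arriving interval iff it does not overlap any interval previously accepted by $\textsc{Greedy}$. Prediction error: $\eta(\mathcal{I},\hat{\mathbf{O}})=\frac{|\textsc{Opt}(\mathcal{I})|-|\textsc{Trust}(\mathcal{I},\hat{\mathbf{O}})|}{|\textsc{Opt}(\mathcal{I})|}$. \textsc{SmoothMerge}$(p_t,p_g)$: it simulates \textsc{Trust} and \textsc{Greedy} on the input and maintains a set $S$ (initially empty); on arrival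 of $I$: if $I$ overlaps an interval in $S$, reject; else if both \textsc{Trust} and \textsc{Greedy} accept $I$, add $I$ to $S$; else if only \textsc{Trust} accepts $I$, add $I$ to $S$ with probability $p_t$; else if only \textsc{Greedy} accepts $I$, add $I$ to $S$ with probability $p_g$; else reject (all coin flips independent). The output is $S$, and $\textsc{Alg}(\mathcal{I})=S$. *)

theory Defs
  imports "HOL-Probability.Probability"
begin

text \<open>An interval is a pair (release time r, deadline d); its length is d - r.
  Intervals are treated as half-open [r,d): two intervals overlap iff they share
  a point of positive measure.\<close>

type_synonym interval = "real \<times> real"

definition len :: "interval \<Rightarrow> real" where
  "len I = snd I - fst I"

definition overlaps :: "interval \<Rightarrow> interval \<Rightarrow> bool" where
  "overlaps I J \<longleftrightarrow> fst I < snd J \<and> fst J < snd I"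

definition feasible :: "interval list \<Rightarrow> nat set \<Rightarrow> bool" where
  "feasible xs F \<longleftrightarrow> F \<subseteq> {..<length xs} \<and>
     (\<forall>i\<in>F. \<forall>j\<in>F. i \<noteq> j \<longrightarrow> \<not> overlaps (xs ! i) (xs ! j))"

definition total_len :: "interval list \<Rightarrow> nat set \<Rightarrow> real" where
  "total_len xs F = (\<Sum>i\<in>F. len (xs ! i))"

definition opt_val :: "interval list \<Rightarrow> real" where
  "opt_val xs = Max (total_len xs ` {F. feasible xs F})"

definition trust_set :: "bool list \<Rightarrow> nat set" where
  "trust_set ps = {i. i < length ps \<and> ps ! i}"

definition trust_val :: "interval list \<Rightarrow> bool list \<Rightarrow> real" where
  "trust_val xs ps = total_len xs (trust_set ps)"

definition eta :: "interval list \<Rightarrow> bool list \<Rightarrow> real" where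
  "eta xs ps = (opt_val xs - trust_val xs ps) / opt_val xs"

fun greedy_aux :: "interval list \<Rightarrow> interval list \<Rightarrow> bool list" where
  "greedy_aux A [] = []"
| "greedy_aux A (I # Is) =
     (if (\<forall>J\<in>set A. \<not> overlaps I J) then True # greedy_aux (I # A) Is
      else False # greedy_aux A Is)"

definition greedy_dec :: "interval list \<Rightarrow> bool list" where
  "greedy_dec xs = greedy_aux [] xs"

definition greedy_val :: "interval list \<Rightarrow> real" where
  "greedy_val xs = total_len xs {i. i < length xs \<and> greedy_dec xs ! i}"

fun sm_aux :: "real \<Rightarrow> real \<Rightarrow> interval list \<Rightarrow> (interval \<times> bool \<times> bool) list
                 \<Rightarrow> interval list pmf" where
  "sm_aux pt pg S [] = return_pmf S"
| "sm_aux pt pg S ((I, t, g) # rest) =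
     (if (\<exists>J\<in>set S. overlaps I J) then sm_aux pt pg S rest
      else bind_pmf
        (if t \<and> g then return_pmf True
         else if t then bernoulli_pmf pt
         else if g then bernoulli_pmf pg
         else return_pmf False)
        (\<lambda>b. sm_aux pt pg (if b then S @ [I] else S) rest))"

definition smooth_merge :: "real \<Rightarrow> real \<Rightarrow> interval list \<Rightarrow> bool list \<Rightarrow> interval list pmf" where
  "smooth_merge pt pg xs ps = sm_aux pt pg [] (zip xs (zip ps (greedy_dec xs)))"

definition expected_alg :: "real \<Rightarrow> real \<Rightarrow> interval list \<Rightarrow> bool list \<Rightarrow> real" where
  "expected_alg pt pg xs ps =
     measure_pmf.expectation (smooth_merge pt pg xs ps) (\<lambda>S. sum_list (map len S))"

end

theory Submission
  imports Defs
begin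

lemma prob_bind_bool:
  fixes B :: "bool pmf"
  shows "measure_pmf.prob (bind_pmf B F) A =
    pmf B True * measure_pmf.prob (F True) A + pmf B False * measure_pmf.prob (F False) A"
proof -
  have "emeasure (measure_pmf (bind_pmf B F)) A = (\<integral>\<^sup>+x. emeasure (F x) A \<partial>B)" by simp
  also have "\<dots> = (\<Sum>x\<in>UNIV. emeasure (F x) A * pmf B x)"
    by (rule nn_integral_measure_pmf_support) auto
  also have "\<dots> = emeasure (F True) A * pmf B True + emeasure (F False) A * pmf B False"
    by (simp add: UNIV_bool)
  finally have "emeasure (measure_pmf (bind_pmf B F)) A = ennreal (pmf B True * measure_pmf.prob (F True) A + pmf B False * measure_pmf.prob (F False) A)"
    by (simp add: measure_pmf.emeasure_eq_measure ennreal_mult ennreal_plus mult.commute)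
  then have "ennreal (measure_pmf.prob (bind_pmf B F) A) = ennreal (pmf B True * measure_pmf.prob (F True) A + pmf B False * measure_pmf.prob (F False) A)"
    by (simp add: measure_pmf.emeasure_eq_measure)
  then show ?thesis by (subst (asm) ennreal_inj) auto
qed



lemma overlaps_sym: "overlaps I J = overlaps J I"
  unfolding overlaps_def by auto

type_synonym trip = "interval \<times> bool \<times> bool"

definition qv :: "real \<Rightarrow> real \<Rightarrow> bool \<Rightarrow> bool \<Rightarrow> real" where
  "qv pt pg t g = (if t \<and> g then 1 else if t then pt else if g then pg else 0)"

definition coin :: "real \<Rightarrow> real \<Rightarrow> bool \<Rightarrow> bool \<Rightarrow> bool pmf" where
  "coin pt pg t g = (if t \<and> g then return_pmf True else if t then bernoulli_pmf pt
     else if g then bernoulli_pmf pg else return_pmf False)"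

lemma pmf_coin:
  assumes "0 \<le> pt" "pt \<le> 1" "0 \<le> pg" "pg \<le> 1"
  shows "pmf (coin pt pg t g) True = qv pt pg t g" "pmf (coin pt pg t g) False = 1 - qv pt pg t g"
  using assms by (auto simp: coin_def qv_def)

lemma set_coin: "b \<in> set_pmf (coin pt pg t g) \<Longrightarrow> b \<Longrightarrow> t \<or> g"
  by (auto simp: coin_def split: if_splits)

fun dec :: "real \<Rightarrow> real \<Rightarrow> interval list \<Rightarrow> trip list \<Rightarrow> bool list pmf" where
  "dec pt pg S [] = return_pmf []"
| "dec pt pg S ((I, t, g) # rest) =
     (if (\<exists>J\<in>set S. overlaps I J) then map_pmf (Cons False) (dec pt pg S rest)
      else bind_pmf (coin pt pg t g)
        (\<lambda>b. map_pmf (Cons b) (dec pt pg (if b then S @ [I] else S) rest)))"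

fun sel :: "trip list \<Rightarrow> bool list \<Rightarrow> interval list" where
  "sel (x # xs) (b # bs) = (if b then [fst x] else []) @ sel xs bs"
| "sel _ _ = []"

lemma sm_dec: "sm_aux pt pg S rest = map_pmf (\<lambda>D. S @ sel rest D) (dec pt pg S rest)"
proof (induction rest arbitrary: S)
  case Nil
  then show ?case by simp
next
  case (Cons x rest)
  obtain I t g where x: "x = (I, t, g)" by (cases x) auto
  show ?case
  proof (cases "\<exists>J\<in>set S. overlaps I J")
    case True
    then show ?thesis using Cons.IH by (simp add: x map_pmf_comp)
  next
    case False
    have "sm_aux pt pg S (x # rest) = bind_pmf (coin pt pg t g)
        (\<lambda>b. sm_aux pt pg (if b then S @ [I] else S) rest)"
      using False by (simp add: x coin_def)
    also have "\<dots> = bind_pmf (coin pt pg t g)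
        (\<lambda>b. map_pmf (\<lambda>D. S @ sel (x # rest) D) (map_pmf (Cons b) (dec pt pg (if b then S @ [I] else S) rest)))"
      by (intro bind_pmf_cong refl) (auto simp: Cons.IH map_pmf_comp x)
    also have "\<dots> = map_pmf (\<lambda>D. S @ sel (x # rest) D) (dec pt pg S (x # rest))"
      using False by (simp add: x map_bind_pmf)
    finally show ?thesis .
  qed
qed

definition blk :: "interval list \<Rightarrow> trip list \<Rightarrow> bool list \<Rightarrow> nat \<Rightarrow> bool" where
  "blk S rest D i = ((\<exists>J\<in>set S. overlaps (fst (rest ! i)) J) \<or>
      (\<exists>j<i. D ! j \<and> overlaps (fst (rest ! j)) (fst (rest ! i))))"

lemma ex_less_Suc': "(\<exists>j<Suc n. P j) = (P 0 \<or> (\<exists>j<n. P (Suc j)))"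
  by (metis less_Suc_eq_0_disj)

lemma blk_Cons: "blk S (x # rest) (b # D) (Suc i) =
   blk (if b then S @ [fst x] else S) rest D i"
  unfolding blk_def ex_less_Suc' by (auto simp: overlaps_sym)

lemma prob_dec:
  assumes "0 \<le> pt" "pt \<le> 1" "0 \<le> pg" "pg \<le> 1"
  shows "i < length rest \<Longrightarrow> measure_pmf.prob (dec pt pg S rest) {D. D ! i} =
     qv pt pg (fst (snd (rest ! i))) (snd (snd (rest ! i))) *
     measure_pmf.prob (dec pt pg S rest) {D. \<not> blk S rest D i}"
proof (induction rest arbitrary: S i)
  case Nil
  then show ?case by simp
next
  case (Cons x rest)
  obtain I t g where x: "x = (I, t, g)" by (cases x) auto
  show ?case
  proof (cases i)
    case 0
    show ?thesis
    proof (cases "\<exists>J\<in>set S. overlaps I J")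
      case True
      then have "{D. \<not> blk S (x # rest) D i} = {}" by (auto simp: blk_def x 0)
      then show ?thesis using True by (simp add: x 0 vimage_def)
    next
      case False
      then have e: "{D. \<not> blk S (x # rest) D i} = UNIV" by (auto simp: blk_def x 0)
      have p: "measure_pmf.prob (dec pt pg S (x # rest)) {D. D ! i} = qv pt pg t g"
        using False by (simp add: x 0 prob_bind_bool pmf_coin[OF assms] vimage_def)
      have "measure_pmf.prob (dec pt pg S (x # rest)) {D. \<not> blk S (x # rest) D i} = 1"
        unfolding e by simp
      with p show ?thesis by (simp add: x 0 del: dec.simps)
    qed
  next
    case (Suc i')
    then have i': "i' < length rest" using Cons.prems by simp
    show ?thesis
    proof (cases "\<exists>J\<in>set S. overlaps I J")
      case True
      have "{D. \<not> blk S (x # rest) D i} \<inter> range (Cons False) = Cons False ` {D. \<not> blk S rest D i'}"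
        using blk_Cons[of S x rest False _ i'] by (auto simp: Suc)
      have "measure_pmf.prob (dec pt pg S (x # rest)) {D. D ! i} =
            measure_pmf.prob (dec pt pg S rest) {D. D ! i'}"
        using True by (simp add: x Suc vimage_def)
      also have "\<dots> = qv pt pg (fst (snd (rest ! i'))) (snd (snd (rest ! i'))) *
          measure_pmf.prob (dec pt pg S rest) {D. \<not> blk S rest D i'}"
        using Cons.IH[OF i'] .
      also have "measure_pmf.prob (dec pt pg S rest) {D. \<not> blk S rest D i'} =
          measure_pmf.prob (dec pt pg S (x # rest)) {D. \<not> blk S (x # rest) D i}"
        using True blk_Cons[of S x rest False _ i'] by (simp add: x Suc vimage_def)
      finally show ?thesis by (simp add: Suc)
    next
      case False
      let ?q = "qv pt pg (fst (snd (rest ! i'))) (snd (snd (rest ! i')))"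
      have "measure_pmf.prob (dec pt pg S (x # rest)) {D. D ! i} =
            qv pt pg t g * measure_pmf.prob (dec pt pg (S @ [I]) rest) {D. D ! i'} +
            (1 - qv pt pg t g) * measure_pmf.prob (dec pt pg S rest) {D. D ! i'}"
        using False by (simp add: x Suc vimage_def prob_bind_bool pmf_coin[OF assms])
      also have "\<dots> = ?q * (qv pt pg t g * measure_pmf.prob (dec pt pg (S @ [I]) rest) {D. \<not> blk (S @ [I]) rest D i'} +
            (1 - qv pt pg t g) * measure_pmf.prob (dec pt pg S rest) {D. \<not> blk S rest D i'})"
        using Cons.IH[OF i', of "S @ [I]"] Cons.IH[OF i', of S] by (simp add: algebra_simps)
      also have "qv pt pg t g * measure_pmf.prob (dec pt pg (S @ [I]) rest) {D. \<not> blk (S @ [I]) rest D i'} +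
            (1 - qv pt pg t g) * measure_pmf.prob (dec pt pg S rest) {D. \<not> blk S rest D i'} =
          measure_pmf.prob (dec pt pg S (x # rest)) {D. \<not> blk S (x # rest) D i}"
        using False blk_Cons[of S x rest True _ i'] blk_Cons[of S x rest False _ i']
        by (simp add: x Suc vimage_def prob_bind_bool pmf_coin[OF assms])
      finally show ?thesis by (simp add: Suc)
    qed
  qed
qed




lemma dec_support:
  "D \<in> set_pmf (dec pt pg S rest) \<Longrightarrow> length D = length rest \<and>
     (\<forall>i<length rest. D ! i \<longrightarrow> \<not> blk S rest D i \<and> (fst (snd (rest ! i)) \<or> snd (snd (rest ! i))))"
proof (induction rest arbitrary: S D)
  case Nil
  then show ?case by simp
next
  case (Cons x rest)
  obtain I t g where x: "x = (I, t, g)" by (cases x) auto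
  show ?case
  proof (cases "\<exists>J\<in>set S. overlaps I J")
    case True
    then obtain D' where D: "D = False # D'" and D': "D' \<in> set_pmf (dec pt pg S rest)"
      using Cons.prems by (auto simp: x)
    note ih = Cons.IH[OF D']
    have "length D = length (x # rest)" using ih D by simp
    moreover have "\<forall>i<length (x # rest). D ! i \<longrightarrow> \<not> blk S (x # rest) D i \<and> (fst (snd ((x # rest) ! i)) \<or> snd (snd ((x # rest) ! i)))"
    proof (intro allI impI)
      fix i assume i: "i < length (x # rest)" and Di: "D ! i"
      then obtain i' where i': "i = Suc i'" using D by (cases i) auto
      have "D' ! i'" using Di D i' by simp
      then show "\<not> blk S (x # rest) D i \<and> (fst (snd ((x # rest) ! i)) \<or> snd (snd ((x # rest) ! i)))"
        using ih i i' D blk_Cons[of S x rest False D' i'] by auto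
    qed
    ultimately show ?thesis by blast
  next
    case False
    then obtain b D' where D: "D = b # D'" and b: "b \<in> set_pmf (coin pt pg t g)"
       and D': "D' \<in> set_pmf (dec pt pg (if b then S @ [I] else S) rest)"
      using Cons.prems by (auto simp: x)
    note ih = Cons.IH[OF D']
    have "length D = length (x # rest)" using ih D by simp
    moreover have "\<forall>i<length (x # rest). D ! i \<longrightarrow> \<not> blk S (x # rest) D i \<and> (fst (snd ((x # rest) ! i)) \<or> snd (snd ((x # rest) ! i)))"
    proof (intro allI impI)
      fix i assume i: "i < length (x # rest)" and Di: "D ! i"
      show "\<not> blk S (x # rest) D i \<and> (fst (snd ((x # rest) ! i)) \<or> snd (snd ((x # rest) ! i)))"
      proof (cases i)
        case 0
        then show ?thesis using False Di D b set_coin[of b pt pg t g]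
          by (auto simp: blk_def x)
      next
        case (Suc i')
        have "D' ! i'" using Di D Suc by simp
        then show ?thesis
          using ih i Suc D blk_Cons[of S x rest b D' i'] by (auto simp: x)
      qed
    qed
    ultimately show ?thesis by blast
  qed
qed

lemma dec_finite: "finite (set_pmf (dec pt pg S rest))"
proof (induction rest arbitrary: S)
  case Nil
  then show ?case by simp
next
  case (Cons x rest)
  obtain I t g where x: "x = (I, t, g)" by (cases x) auto
  have fc: "finite (set_pmf (coin pt pg t g))" by (rule finite_subset[of _ UNIV]) auto
  show ?case using Cons.IH fc by (auto simp: x)
qed

lemma sel_sum: "length D = length rest \<Longrightarrow>
  sum_list (map len (sel rest D)) = (\<Sum>i<length rest. if D ! i then len (fst (rest ! i)) else 0)"
proof (induction rest arbitrary: D)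
  case Nil
  then show ?case by simp
next
  case (Cons x rest)
  then obtain b D' where D: "D = b # D'" by (cases D) auto
  have "(\<Sum>i<length rest. if D' ! i then len (fst (rest ! i)) else 0) =
        (\<Sum>i<length rest. if D' ! i then len (fst ((x # rest) ! Suc i)) else 0)"
    by (simp only: nth_Cons_Suc)
  then show ?case using Cons D by (simp add: sum.lessThan_Suc_shift del: sum.lessThan_Suc)
qed

lemma expect_dec:
  "measure_pmf.expectation (dec pt pg S rest) (\<lambda>D. sum_list (map len (sel rest D))) =
   (\<Sum>i<length rest. len (fst (rest ! i)) * measure_pmf.prob (dec pt pg S rest) {D. D ! i})"
proof -
  let ?M = "dec pt pg S rest"
  have "measure_pmf.expectation ?M (\<lambda>D. sum_list (map len (sel rest D))) =
        measure_pmf.expectation ?M (\<lambda>D. \<Sum>i<length rest. len (fst (rest ! i)) * indicator {D. D ! i} D)"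
  proof (intro integral_cong_AE)
    show "AE D in ?M. sum_list (map len (sel rest D)) = (\<Sum>i<length rest. len (fst (rest ! i)) * indicator {D. D ! i} D)"
      unfolding AE_measure_pmf_iff
    proof
      fix D assume "D \<in> set_pmf ?M"
      then have "length D = length rest" using dec_support by blast
      then show "sum_list (map len (sel rest D)) = (\<Sum>i<length rest. len (fst (rest ! i)) * indicator {D. D ! i} D)"
        unfolding sel_sum[OF \<open>length D = length rest\<close>] by (intro sum.cong) (auto simp: indicator_def)
    qed
  qed simp_all
  also have "\<dots> = (\<Sum>i<length rest. measure_pmf.expectation ?M (\<lambda>D. len (fst (rest ! i)) * indicator {D. D ! i} D))"
    by (intro Bochner_Integration.integral_sum integrable_measure_pmf_finite dec_finite)
  also have "\<dots> = (\<Sum>i<length rest. len (fst (rest ! i)) * measure_pmf.prob ?M {D. D ! i})"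
    by simp
  finally show ?thesis .
qed




lemma all_less_Suc': "(\<forall>j<Suc n. P j) = (P 0 \<and> (\<forall>j<n. P (Suc j)))"
  by (metis less_Suc_eq_0_disj)

lemma greedy_aux_len: "length (greedy_aux A xs) = length xs"
  by (induction A xs rule: greedy_aux.induct) auto

lemma greedy_aux_nth: "i < length xs \<Longrightarrow> greedy_aux A xs ! i =
  ((\<forall>J\<in>set A. \<not> overlaps (xs ! i) J) \<and> (\<forall>j<i. greedy_aux A xs ! j \<longrightarrow> \<not> overlaps (xs ! i) (xs ! j)))"
proof (induction xs arbitrary: A i)
  case Nil
  then show ?case by simp
next
  case (Cons I Is)
  show ?case
  proof (cases i)
    case 0
    then show ?thesis by simp
  next
    case (Suc i')
    then have i': "i' < length Is" using Cons.prems by simp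
    show ?thesis
      using Cons.IH[OF i', of "I # A"] Cons.IH[OF i', of A]
      by (auto simp: Suc all_less_Suc' overlaps_sym)
  qed
qed

locale SM =
  fixes pt pg :: real and xs :: "interval list" and ps :: "bool list"
  assumes pt0: "0 \<le> pt" and pt1: "pt \<le> 1" and pg0: "0 \<le> pg" and pg1: "pg \<le> 1"
    and ptpg: "pt * pg < 1"
    and pos: "\<forall>I\<in>set xs. fst I < snd I"
    and srt: "sorted (map fst xs)"
    and lenps: "length ps = length xs"
    and feas: "feasible xs (trust_set ps)"
begin

definition "gd = greedy_dec xs"
definition "rest = zip xs (zip ps gd)"
definition "M = dec pt pg [] rest"
definition "P i = measure_pmf.prob M {D. D ! i}"
definition "Blk D i = (\<exists>j<i. D ! j \<and> overlaps (xs ! j) (xs ! i))"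
definition "qq i = qv pt pg (ps ! i) (gd ! i)"

lemma len_gd: "length gd = length xs"
  by (simp add: gd_def greedy_dec_def greedy_aux_len)

lemma len_rest: "length rest = length xs"
  by (simp add: rest_def len_gd lenps)

lemma rest_nth: "i < length xs \<Longrightarrow> rest ! i = (xs ! i, ps ! i, gd ! i)"
  by (simp add: rest_def len_gd lenps)

lemma gd_nth: "i < length xs \<Longrightarrow> gd ! i = (\<forall>j<i. gd ! j \<longrightarrow> \<not> overlaps (xs ! i) (xs ! j))"
  unfolding gd_def greedy_dec_def using greedy_aux_nth[of i xs "[]"] by simp

lemma blk_Blk: "i < length xs \<Longrightarrow> blk [] rest D i = Blk D i"
  unfolding blk_def Blk_def using rest_nth by auto

lemma support: "D \<in> set_pmf M \<Longrightarrow> i < length xs \<Longrightarrow> D ! i \<Longrightarrow> \<not> Blk D i \<and> (ps ! i \<or> gd ! i)"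
  using dec_support[of D pt pg "[]" rest] unfolding M_def
  by (auto simp: len_rest rest_nth blk_Blk)

lemma P_eq: "i < length xs \<Longrightarrow> P i = qq i * (1 - measure_pmf.prob M {D. Blk D i})"
proof -
  assume i: "i < length xs"
  have "P i = qq i * measure_pmf.prob M {D. \<not> blk [] rest D i}"
    unfolding P_def M_def qq_def
    using prob_dec[OF pt0 pt1 pg0 pg1, of i rest "[]"] i by (simp add: len_rest rest_nth)
  also have "{D. \<not> blk [] rest D i} = UNIV - {D. Blk D i}" using blk_Blk[OF i] by auto
  also have "measure_pmf.prob M (UNIV - {D. Blk D i}) = 1 - measure_pmf.prob M {D. Blk D i}"
    using measure_pmf.prob_compl[of "{D. Blk D i}" M] by simp
  finally show ?thesis .
qed

lemma prob_mono_supp: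
  assumes "\<And>D. D \<in> set_pmf M \<Longrightarrow> D \<in> A \<Longrightarrow> D \<in> B"
  shows "measure_pmf.prob M A \<le> measure_pmf.prob M B"
proof -
  have "measure_pmf.prob M A = measure_pmf.prob M (A \<inter> set_pmf M)"
    by (simp add: measure_Int_set_pmf)
  also have "\<dots> \<le> measure_pmf.prob M B"
    using assms by (intro measure_pmf.finite_measure_mono) auto
  finally show ?thesis .
qed

lemma geo:
  assumes "j1 < j2" "j2 \<le> k" "k < length xs" "overlaps (xs ! j1) (xs ! k)"
  shows "overlaps (xs ! j1) (xs ! j2)"
proof -
  have s1: "fst (xs ! j1) \<le> fst (xs ! j2)" "fst (xs ! j2) \<le> fst (xs ! k)"
    using srt assms sorted_nth_mono[of "map fst xs"] by auto
  have "fst (xs ! j2) < snd (xs ! j2)" using pos assms by auto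
  then show ?thesis using s1 assms(4) unfolding overlaps_def by auto
qed

lemma geo2:
  assumes "j1 < k" "j2 < k" "k < length xs" "overlaps (xs ! j1) (xs ! k)" "overlaps (xs ! j2) (xs ! k)"
    "j1 \<noteq> j2"
  shows "overlaps (xs ! j1) (xs ! j2)"
proof (cases "j1 < j2")
  case True
  then show ?thesis using geo[of j1 j2 k] assms by auto
next
  case False
  then have "j2 < j1" using assms by auto
  then show ?thesis using geo[of j2 j1 k] assms by (auto simp: overlaps_sym)
qed

lemma trust_disj: "i < length xs \<Longrightarrow> j < length xs \<Longrightarrow> ps ! i \<Longrightarrow> ps ! j \<Longrightarrow> i \<noteq> j \<Longrightarrow>
  \<not> overlaps (xs ! i) (xs ! j)"
  using feas lenps unfolding feasible_def trust_set_def by auto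

lemma greedy_disj: "i < length xs \<Longrightarrow> j < i \<Longrightarrow> gd ! i \<Longrightarrow> gd ! j \<Longrightarrow> \<not> overlaps (xs ! i) (xs ! j)"
  using gd_nth by auto

lemma prob_le1: "measure_pmf.prob M A \<le> 1" by simp

lemma trust_blk:
  assumes i: "i < length xs" and t: "ps ! i"
  shows "measure_pmf.prob M {D. Blk D i} \<le> pg"
proof (cases "\<exists>j<i. gd ! j \<and> \<not> ps ! j \<and> overlaps (xs ! j) (xs ! i)")
  case True
  then obtain j0 where j0: "j0 < i" "gd ! j0" "\<not> ps ! j0" "overlaps (xs ! j0) (xs ! i)" by blast
  have "measure_pmf.prob M {D. Blk D i} \<le> P j0"
    unfolding P_def
  proof (rule prob_mono_supp)
    fix D assume D: "D \<in> set_pmf M" "D \<in> {D. Blk D i}"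
    then obtain j where j: "j < i" "D ! j" "overlaps (xs ! j) (xs ! i)" unfolding Blk_def by auto
    have sj: "ps ! j \<or> gd ! j" using support[OF D(1) _ j(2)] j i by auto
    have "\<not> ps ! j" using trust_disj[of i j] j i t by (auto simp: overlaps_sym)
    with sj have "gd ! j" by auto
    have "j = j0"
    proof (rule ccontr)
      assume "j \<noteq> j0"
      then have "overlaps (xs ! j) (xs ! j0)" using geo2[of j i j0] j j0 i by auto
      moreover have "j < length xs" "j0 < length xs" using j j0 i by auto
      ultimately show False using greedy_disj[of j j0] greedy_disj[of j0 j] \<open>gd ! j\<close> \<open>j \<noteq> j0\<close> j0 j i
        by (cases "j < j0") (auto simp: overlaps_sym)
    qed
    then show "D \<in> {D. D ! j0}" using j by auto
  qed
  also have "P j0 = pg * (1 - measure_pmf.prob M {D. Blk D j0})"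
    using P_eq[of j0] j0 i by (simp add: qq_def qv_def)
  also have "\<dots> \<le> pg" using pg0 by (simp add: mult_left_le)
  finally show ?thesis .
next
  case False
  have "measure_pmf.prob M {D. Blk D i} \<le> measure_pmf.prob M {}"
  proof (rule prob_mono_supp)
    fix D assume D: "D \<in> set_pmf M" "D \<in> {D. Blk D i}"
    then obtain j where j: "j < i" "D ! j" "overlaps (xs ! j) (xs ! i)" unfolding Blk_def by auto
    have sj: "ps ! j \<or> gd ! j" using support[OF D(1) _ j(2)] j i by auto
    have "\<not> ps ! j" using trust_disj[of i j] j i t by (auto simp: overlaps_sym)
    with sj False j show "D \<in> {}" by auto
  qed
  then show ?thesis using pg0 by simp
qed

lemma trust_P: "i < length xs \<Longrightarrow> ps ! i \<Longrightarrow> P i \<ge> pt * (1 - pg)"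
proof -
  assume i: "i < length xs" and t: "ps ! i"
  have q: "qq i \<ge> pt" using t pt1 by (auto simp: qq_def qv_def)
  have "pt * (1 - pg) \<le> qq i * (1 - measure_pmf.prob M {D. Blk D i})"
    using trust_blk[OF i t] q pt0 pg1 by (intro mult_mono) auto
  then show ?thesis using P_eq[OF i] by simp
qed

end



context SM begin

definition "beta = pt * (1 - pg) / (1 - pt * pg)"

lemma beta_ge0: "0 \<le> beta"
  unfolding beta_def using pt0 pg1 ptpg by auto

lemma beta_le1: "beta \<le> 1"
proof -
  have "pt * (1 - pg) \<le> 1 - pt * pg" using pt1 by (simp add: algebra_simps)
  then show ?thesis unfolding beta_def using ptpg by simp
qed

lemma beta_fix: "pt * (1 - pg * (1 - beta)) = beta"
  unfolding beta_def using ptpg by (simp add: field_simps)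

lemma beta_c: "pg * (1 - beta) = (pg - pt * pg) / (1 - pt * pg)"
  unfolding beta_def using ptpg by (simp add: field_simps)

lemma P_nonneg: "0 \<le> P i" by (simp add: P_def)

lemma greedy_blk:
  assumes j: "j < length xs" and g: "gd ! j" and IH: "\<And>m. m < j \<Longrightarrow> ps ! m \<Longrightarrow> \<not> gd ! m \<Longrightarrow> P m \<le> beta"
  shows "measure_pmf.prob M {D. Blk D j} \<le> beta"
proof (cases "\<exists>m<j. ps ! m \<and> \<not> gd ! m \<and> overlaps (xs ! m) (xs ! j)")
  case True
  then obtain m0 where m0: "m0 < j" "ps ! m0" "\<not> gd ! m0" "overlaps (xs ! m0) (xs ! j)" by blast
  have "measure_pmf.prob M {D. Blk D j} \<le> P m0"
    unfolding P_def
  proof (rule prob_mono_supp)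
    fix D assume D: "D \<in> set_pmf M" "D \<in> {D. Blk D j}"
    then obtain k where k: "k < j" "D ! k" "overlaps (xs ! k) (xs ! j)" unfolding Blk_def by auto
    have kl: "k < length xs" "m0 < length xs" using k m0 j by auto
    have sk: "ps ! k \<or> gd ! k" using support[OF D(1) kl(1) k(2)] by auto
    have "\<not> gd ! k" using greedy_disj[OF j k(1) g] k by (auto simp: overlaps_sym)
    with sk have "ps ! k" by auto
    have "k = m0"
    proof (rule ccontr)
      assume "k \<noteq> m0"
      then have "overlaps (xs ! k) (xs ! m0)" using geo2[of k j m0] k m0 j by auto
      then show False using trust_disj[OF kl] \<open>ps ! k\<close> m0 \<open>k \<noteq> m0\<close> by auto
    qed
    then show "D \<in> {D. D ! m0}" using k by auto
  qed
  also have "\<dots> \<le> beta" using IH m0 by auto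
  finally show ?thesis .
next
  case False
  have "measure_pmf.prob M {D. Blk D j} \<le> measure_pmf.prob M {}"
  proof (rule prob_mono_supp)
    fix D assume D: "D \<in> set_pmf M" "D \<in> {D. Blk D j}"
    then obtain k where k: "k < j" "D ! k" "overlaps (xs ! k) (xs ! j)" unfolding Blk_def by auto
    have kl: "k < length xs" using k j by auto
    have sk: "ps ! k \<or> gd ! k" using support[OF D(1) kl(1) k(2)] by auto
    have "\<not> gd ! k" using greedy_disj[OF j k(1) g] k by (auto simp: overlaps_sym)
    with sk False k show "D \<in> {}" by auto
  qed
  then show ?thesis using beta_ge0 by simp
qed

lemma greedy_P_aux:
  assumes j: "j < length xs" and g: "gd ! j" and IH: "\<And>m. m < j \<Longrightarrow> ps ! m \<Longrightarrow> \<not> gd ! m \<Longrightarrow> P m \<le> beta"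
  shows "P j \<ge> pg * (1 - beta)"
proof -
  have q: "qq j \<ge> pg" using g pg1 by (auto simp: qq_def qv_def)
  have "pg * (1 - beta) \<le> qq j * (1 - measure_pmf.prob M {D. Blk D j})"
    using greedy_blk[OF j g IH] q pg0 beta_le1 by (intro mult_mono) auto
  then show ?thesis using P_eq[OF j] by simp
qed

lemma trustonly_P: "m < length xs \<Longrightarrow> ps ! m \<Longrightarrow> \<not> gd ! m \<Longrightarrow> P m \<le> beta"
proof (induction m rule: less_induct)
  case (less m)
  obtain j where j: "j < m" "gd ! j" "overlaps (xs ! m) (xs ! j)"
    using gd_nth[OF less.prems(1)] less.prems(3) by auto
  have jl: "j < length xs" using j less.prems by auto
  have Pj: "P j \<ge> pg * (1 - beta)"
    using greedy_P_aux[OF jl j(2)] less.IH j less.prems by auto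
  have "P j \<le> measure_pmf.prob M {D. Blk D m}"
    unfolding P_def
  proof (rule prob_mono_supp)
    fix D assume "D \<in> {D. D ! j}"
    then show "D \<in> {D. Blk D m}" using j unfolding Blk_def by (auto simp: overlaps_sym)
  qed
  then have "1 - measure_pmf.prob M {D. Blk D m} \<le> 1 - pg * (1 - beta)" using Pj by simp
  moreover have "qq m = pt" using less.prems by (simp add: qq_def qv_def)
  ultimately have "P m \<le> pt * (1 - pg * (1 - beta))"
    using P_eq[OF less.prems(1)] pt0 by (simp add: mult_left_mono)
  then show ?case using beta_fix by simp
qed

lemma greedy_P: "j < length xs \<Longrightarrow> gd ! j \<Longrightarrow> P j \<ge> (pg - pt * pg) / (1 - pt * pg)"
  using greedy_P_aux[of j] trustonly_P beta_c by auto

lemma len_nonneg: "i < length xs \<Longrightarrow> 0 \<le> len (xs ! i)"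
  using pos unfolding len_def by (metis less_eq_real_def nth_mem diff_ge_0_iff_ge)

lemma expect: "expected_alg pt pg xs ps = (\<Sum>i<length xs. len (xs ! i) * P i)"
proof -
  have "smooth_merge pt pg xs ps = map_pmf (\<lambda>D. [] @ sel rest D) M"
    unfolding smooth_merge_def M_def rest_def gd_def by (simp add: sm_dec)
  then have "expected_alg pt pg xs ps = measure_pmf.expectation M (\<lambda>D. sum_list (map len (sel rest D)))"
    unfolding expected_alg_def by simp
  also have "\<dots> = (\<Sum>i<length rest. len (fst (rest ! i)) * measure_pmf.prob M {D. D ! i})"
    unfolding M_def by (rule expect_dec)
  also have "\<dots> = (\<Sum>i<length xs. len (xs ! i) * P i)"
    by (intro sum.cong) (auto simp: len_rest rest_nth P_def)
  finally show ?thesis .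
qed

lemma sum_filter: "(\<Sum>i\<in>{i. i < length xs \<and> Q i}. f i) = (\<Sum>i<length xs. if Q i then f i else 0)"
proof -
  have "{i. i < length xs \<and> Q i} = {i\<in>{..<length xs}. Q i}" by auto
  then show ?thesis by (simp only:) (rule sum.inter_filter, simp)
qed

lemma bound_trust: "expected_alg pt pg xs ps \<ge> pt * (1 - pg) * trust_val xs ps"
proof -
  have "pt * (1 - pg) * trust_val xs ps = (\<Sum>i<length xs. if ps ! i then pt * (1 - pg) * len (xs ! i) else 0)"
    unfolding trust_val_def total_len_def trust_set_def lenps sum_filter sum_distrib_left
    by (intro sum.cong) auto
  also have "\<dots> \<le> (\<Sum>i<length xs. len (xs ! i) * P i)"
  proof (intro sum_mono)
    fix i assume i: "i \<in> {..<length xs}"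
    show "(if ps ! i then pt * (1 - pg) * len (xs ! i) else 0) \<le> len (xs ! i) * P i"
      using trust_P[of i] len_nonneg[of i] P_nonneg[of i] i
      by (auto simp: mult.commute intro: mult_left_mono)
  qed
  finally show ?thesis using expect by simp
qed

lemma bound_greedy: "expected_alg pt pg xs ps \<ge> (pg - pt * pg) / (1 - pt * pg) * greedy_val xs"
proof -
  let ?c = "(pg - pt * pg) / (1 - pt * pg)"
  have "?c * greedy_val xs = (\<Sum>i<length xs. if gd ! i then ?c * len (xs ! i) else 0)"
    unfolding greedy_val_def total_len_def gd_def[symmetric] len_gd sum_filter sum_distrib_left
    by (intro sum.cong) auto
  also have "\<dots> \<le> (\<Sum>i<length xs. len (xs ! i) * P i)"
  proof (intro sum_mono)
    fix i assume i: "i \<in> {..<length xs}"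
    show "(if gd ! i then ?c * len (xs ! i) else 0) \<le> len (xs ! i) * P i"
    proof (cases "gd ! i")
      case True
      then have "?c \<le> P i" using greedy_P i by auto
      then have "?c * len (xs ! i) \<le> P i * len (xs ! i)" using len_nonneg i by (intro mult_right_mono) auto
      with True show ?thesis by (simp only: if_True) (metis mult.commute)
    next
      case False
      then show ?thesis using len_nonneg[of i] P_nonneg[of i] i by simp
    qed
  qed
  finally show ?thesis using expect by simp
qed

lemma trust_val_nonneg: "0 \<le> trust_val xs ps"
  unfolding trust_val_def total_len_def trust_set_def
  using len_nonneg lenps by (intro sum_nonneg) auto

lemma main: "expected_alg pt pg xs ps \<ge>
    max (opt_val xs * (1 - eta xs ps) * pt * (1 - pg))
        ((pg - pt * pg) / (1 - pt * pg) * greedy_val xs)"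
proof -
  have "opt_val xs * (1 - eta xs ps) * pt * (1 - pg) \<le> pt * (1 - pg) * trust_val xs ps"
  proof (cases "opt_val xs = 0")
    case True
    then show ?thesis using trust_val_nonneg pt0 pg1 by (simp add: eta_def)
  next
    case False
    then have "opt_val xs * (1 - eta xs ps) = trust_val xs ps"
      by (simp add: eta_def field_simps)
    then show ?thesis by simp
  qed
  then show ?thesis using bound_trust bound_greedy by simp
qed

end


theorem mainTheorem5:
  fixes pt pg :: real and xs :: "interval list" and ps :: "bool list"
  assumes "0 \<le> pt" "pt \<le> 1" "0 \<le> pg" "pg \<le> 1" "pt * pg < 1"
    and "\<forall>I\<in>set xs. fst I < snd I"
    and "sorted (map fst xs)"
    and "length ps = length xs"
    and "feasible xs (trust_set ps)"
  shows "expected_alg pt pg xs ps \<ge>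
    max (opt_val xs * (1 - eta xs ps) * pt * (1 - pg))
        ((pg - pt * pg) / (1 - pt * pg) * greedy_val xs)"
proof -
  interpret SM pt pg xs ps using assms by unfold_locales
  show ?thesis by (rule main)
qed

end
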